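(* Let $N\ge1$ be an integer and $\phi\in\mathbb{C}\{t\}$ with $\phi(0)=0$. Suppose $\phi(t)\in\overline{\mathbb{H}}$ whenever $t$ (in the domain of convergence) satisfies $t^N\in\mathbb{R}$. Then there exist $\psi_0\in\mathbb{R}\{t\}$, an integer $L\ge1$, a real $b\ge0$, and $\psi_1\in\mathbb{C}\{t\}$ with $\psi_1(0)=1$ such that $$\phi(t)=\psi_0(t^N)+ib\,t^{2LN}\psi_1(t).$$ Moreover, $\phi(t)\in\mathbb{R}$ whenever $t^N\in\mathbb{R}$ if and only if $b=0$ can be taken above, i.e. $\phi(t)=\psi_0(t^N)$ for some $\psi_0\in\mathbb{R}\{t\}$.
   Context: $\mathbb{H}=\{z\in\mathbb{C}:\operatorname{Im}z>0\}$ and $\overline{\mathbb{H}}$ its closure. $\mathbb{C}\{t\}$ (resp. $\mathbb{R}\{t\}$) denotes convergent power series at $0$ with complex (resp. real) coefficients. *)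

theory Defs
  imports "HOL-Analysis.Analysis" "HOL-Computational_Algebra.Formal_Power_Series"
begin

definition convergent_ps :: "complex fps \<Rightarrow> bool" where
  "convergent_ps p \<longleftrightarrow> fps_conv_radius p > 0"

definition real_coeffs :: "complex fps \<Rightarrow> bool" where
  "real_coeffs p \<longleftrightarrow> (\<forall>n. fps_nth p n \<in> \<real>)"

definition in_conv_domain :: "complex fps \<Rightarrow> complex \<Rightarrow> bool" where
  "in_conv_domain p t \<longleftrightarrow> ereal (norm t) < fps_conv_radius p"

end

theory Submission
  imports Defs
begin

lemma compose_XN_nth:
  fixes a :: "complex fps"
  assumes "N \<ge> 1"
  shows "fps_nth (a oo fps_X ^ N) n = (if N dvd n then fps_nth a (n div N) else 0)"
proof -
  have "fps_nth (a oo fps_X ^ N) n = (\<Sum>i=0..n. if i = n div N \<and> N dvd n then fps_nth a i else 0)"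
    unfolding fps_compose_nth
  proof (rule sum.cong[OF refl])
    fix i assume "i \<in> {0..n}"
    have "fps_nth ((fps_X ^ N) ^ i) n = (if n = N * i then 1 else 0)"
      by (simp add: power_mult[symmetric])
    moreover have "(n = N * i) \<longleftrightarrow> (i = n div N \<and> N dvd n)"
      using assms by auto
    ultimately show "fps_nth a i * fps_nth ((fps_X ^ N) ^ i) n = (if i = n div N \<and> N dvd n then fps_nth a i else 0)"
      by auto
  qed
  also have "\<dots> = (if N dvd n then fps_nth a (n div N) else 0)"
  proof (cases "N dvd n")
    case True
    have "n div N \<in> {0..n}" by auto
    then show ?thesis using True by (simp add: sum.delta')
  qed simp
  finally show ?thesis .
qed

lemma radius_pos:
  fixes f :: "complex fps"
  assumes "C \<ge> 0" "q > 0" "\<And>n. norm (fps_nth f n) \<le> C * q ^ n"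
  shows "fps_conv_radius f > 0"
proof -
  define w where "w = 1 / (2*q)"
  define z where "z = complex_of_real w"
  have w: "w > 0" using assms(2) by (simp add: w_def)
  have nz: "norm z = w" using w by (simp add: z_def)
  have "summable (\<lambda>n. fps_nth f n * z ^ n)"
  proof (rule summable_comparison_test)
    show "\<exists>N. \<forall>n\<ge>N. norm (fps_nth f n * z ^ n) \<le> C * (1/2) ^ n"
    proof (intro exI allI impI)
      fix n :: nat
      have "norm (fps_nth f n * z ^ n) = norm (fps_nth f n) * (1/(2*q)) ^ n"
        by (simp add: nz norm_mult norm_power w_def)
      also have "\<dots> \<le> C * q ^ n * (1/(2*q)) ^ n"
        by (rule mult_right_mono[OF assms(3)]) (use assms(2) in simp)
      also have "\<dots> = C * (q * (1/(2*q))) ^ n"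
        by (simp only: power_mult_distrib mult.assoc)
      also have "q * (1/(2*q)) = 1/2" using assms(2) by simp
      finally have "norm (fps_nth f n * z ^ n) \<le> C * (1/2) ^ n" .
      thus "norm (fps_nth f n * z ^ n) \<le> C * (1/2) ^ n" .
    qed
    show "summable (\<lambda>n. C * (1/2::real) ^ n)"
      by (intro summable_mult summable_geometric) simp
  qed
  hence "conv_radius (fps_nth f) \<ge> norm z" by (rule conv_radius_geI)
  moreover have "norm z > 0" using w nz by simp
  ultimately show ?thesis unfolding fps_conv_radius_def
    by (meson ereal_less(2) less_le_trans)
qed

lemma coeff_bound:
  fixes f :: "complex fps"
  assumes "fps_conv_radius f > 0"
  shows "\<exists>r0 M. r0 > 0 \<and> ereal r0 < fps_conv_radius f \<and> M \<ge> 0 \<and> (\<forall>n. norm (fps_nth f n) * r0 ^ n \<le> M)"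
proof -
  obtain r0 where r0: "r0 > 0" "ereal r0 < fps_conv_radius f"
  proof (cases "fps_conv_radius f")
    case (real r) then show ?thesis using assms by (intro that[of "r/2"]) auto
  next
    case PInf then show ?thesis by (intro that[of 1]) auto
  qed (use assms in auto)
  have "summable (\<lambda>n. norm (fps_nth f n * complex_of_real r0 ^ n))"
    by (rule norm_summable_fps) (use r0 in simp)
  hence "Bseq (\<lambda>n. norm (fps_nth f n * complex_of_real r0 ^ n))"
    by (intro convergent_imp_Bseq summable_LIMSEQ_zero[THEN convergentI])
  then obtain K where K: "K > 0" "\<And>n. norm (norm (fps_nth f n * complex_of_real r0 ^ n)) \<le> K"
    by (auto simp: Bseq_def)
  show ?thesis
  proof (intro exI conjI allI)
    fix n show "norm (fps_nth f n) * r0 ^ n \<le> K"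
      using K(2)[of n] r0 by (simp add: norm_mult norm_power)
  qed (use r0 K in auto)
qed

lemma lim_nonneg:
  fixes e :: "nat \<Rightarrow> real"
  assumes "summable (\<lambda>n. e n * K ^ n)" "K > 0"
    "\<And>r. 0 < r \<Longrightarrow> r < K \<Longrightarrow> (\<Sum>n. e n * r ^ n) \<ge> 0"
  shows "e 0 \<ge> 0"
proof -
  have c: "isCont (\<lambda>x. \<Sum>n. e n * x ^ n) 0"
    by (rule isCont_powser[OF assms(1)]) (use assms(2) in simp)
  have "(\<lambda>k. (K/2) / real k) \<longlonglongrightarrow> 0" by (rule lim_const_over_n)
  hence "(\<lambda>k. \<Sum>n. e n * ((K/2) / real k) ^ n) \<longlonglongrightarrow> (\<Sum>n. e n * 0 ^ n)"
    by (rule isCont_tendsto_compose[OF c])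
  hence lim: "(\<lambda>k. \<Sum>n. e n * ((K/2) / real k) ^ n) \<longlonglongrightarrow> e 0" by simp
  show ?thesis
  proof (rule LIMSEQ_le_const[OF lim], intro exI allI impI)
    fix k :: nat assume "k \<ge> 1"
    hence "0 < (K/2) / real k" "(K/2) / real k < K" using assms(2)
      by (auto simp: field_simps)
    thus "0 \<le> (\<Sum>n. e n * ((K/2) / real k) ^ n)" by (rule assms(3))
  qed
qed


lemma real_eq_int_mult:
  fixes m N :: nat and k :: int and a :: real
  assumes "N \<ge> 1" "real m * (pi / real N) = of_int k * a * pi"
  shows "real m = of_int k * a * real N"
proof -
  have "real m * pi = of_int k * a * real N * pi"
    using assms by (simp add: field_simps)
  thus ?thesis by simp
qed

lemma core:
  fixes N :: nat and \<phi> :: "complex fps"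
  assumes N: "N \<ge> 1" and conv: "fps_conv_radius \<phi> > 0" and z0: "fps_nth \<phi> 0 = 0"
    and H: "\<forall>t. in_conv_domain \<phi> t \<and> t ^ N \<in> \<real> \<longrightarrow> Im (eval_fps \<phi> t) \<ge> 0"
  assumes c_def: "\<And>n. c n = (if N dvd n then \<i> * complex_of_real (Im (fps_nth \<phi> n)) else fps_nth \<phi> n)"
  shows "(\<forall>n. c n = 0) \<or> (\<exists>L\<ge>1. c (2*L*N) \<noteq> 0 \<and> Im (c (2*L*N)) > 0 \<and> (\<forall>n<2*L*N. c n = 0))"
proof (cases "\<forall>n. c n = 0")
  case True thus ?thesis by blast
next
  case False
  then obtain n0 where n0: "c n0 \<noteq> 0" by blast
  define m where "m = (LEAST n. c n \<noteq> 0)"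
  have cm: "c m \<noteq> 0" unfolding m_def using n0 by (rule LeastI)
  have below: "\<And>n. n < m \<Longrightarrow> c n = 0" unfolding m_def using not_less_Least by blast
  have "c 0 = 0" using z0 by (simp add: c_def)
  hence m0: "m \<noteq> 0" using cm by metis
  obtain r0 M where r0: "r0 > 0" "ereal r0 < fps_conv_radius \<phi>" "M \<ge> 0"
    and M: "\<And>n. norm (fps_nth \<phi> n) * r0 ^ n \<le> M"
    using coeff_bound[OF conv] by blast
  have Mb: "norm (fps_nth \<phi> n) \<le> M / r0 ^ n" for n
    using M[of n] r0(1) by (simp add: field_simps)
  have cb: "norm (c n) \<le> norm (fps_nth \<phi> n)" for n
    by (simp add: c_def abs_Im_le_cmod norm_mult)
  have ray: "Im (c m * \<omega> ^ m) \<ge> 0" if om: "norm \<omega> = 1" "\<omega> ^ N \<in> \<real>" for \<omega>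
  proof -
    define e where "e n = Im (c (n+m) * \<omega> ^ (n+m))" for n
    have trm: "Im (fps_nth \<phi> n * (complex_of_real r * \<omega>) ^ n) = Im (c n * \<omega> ^ n) * r ^ n" for n r
    proof (cases "N dvd n")
      case True
      then obtain k where k: "n = N * k" by blast
      have "\<omega> ^ n = (\<omega> ^ N) ^ k" by (simp add: k power_mult)
      also have "\<dots> \<in> \<real>" using om(2) by simp
      finally obtain s where s: "\<omega> ^ n = complex_of_real s" by (auto elim: Reals_cases)
      show ?thesis using True by (simp add: c_def power_mult_distrib s)
    next
      case False
      thus ?thesis by (simp add: c_def power_mult_distrib algebra_simps)
    qed
    have pos: "(\<Sum>n. e n * r ^ n) \<ge> 0" if r: "0 < r" "r < r0" for r
    proof -
      define t where "t = complex_of_real r * \<omega>"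
      have nt: "norm t = r" using r om by (simp add: t_def norm_mult)
      have dom: "in_conv_domain \<phi> t" unfolding in_conv_domain_def nt
        using r r0(2) by (meson less_ereal.simps(1) order.strict_trans)
      have "t ^ N \<in> \<real>" using om(2) by (simp add: t_def power_mult_distrib)
      hence ge: "Im (eval_fps \<phi> t) \<ge> 0" using H dom by blast
      have "(\<lambda>n. fps_nth \<phi> n * t ^ n) sums eval_fps \<phi> t"
        by (rule sums_eval_fps) (use dom in \<open>simp add: in_conv_domain_def\<close>)
      hence "(\<lambda>n. Im (fps_nth \<phi> n * t ^ n)) sums Im (eval_fps \<phi> t)" by (rule sums_Im)
      moreover have "(\<lambda>n. Im (fps_nth \<phi> n * t ^ n)) = (\<lambda>n. Im (c n * \<omega> ^ n) * r ^ n)"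
        by (rule ext) (simp only: t_def trm)
      ultimately have s1: "(\<lambda>n. Im (c n * \<omega> ^ n) * r ^ n) sums Im (eval_fps \<phi> t)"
        by simp
      have "(\<lambda>n. Im (c (n+m) * \<omega> ^ (n+m)) * r ^ (n+m)) sums Im (eval_fps \<phi> t)"
        using sums_zero_iff_shift[of m "\<lambda>n. Im (c n * \<omega> ^ n) * r ^ n"] s1 below by simp
      hence "(\<lambda>n. (e n * r ^ n) * r ^ m) sums Im (eval_fps \<phi> t)"
        by (simp add: e_def power_add mult_ac)
      hence "(\<lambda>n. (e n * r ^ n) * r ^ m / r ^ m) sums (Im (eval_fps \<phi> t) / r ^ m)"
        by (rule sums_divide)
      hence "(\<lambda>n. e n * r ^ n) sums (Im (eval_fps \<phi> t) / r ^ m)" using r by simp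
      hence "(\<Sum>n. e n * r ^ n) = Im (eval_fps \<phi> t) / r ^ m" by (rule sums_unique[symmetric])
      thus ?thesis using ge r by simp
    qed
    have summ: "summable (\<lambda>n. e n * (r0/2) ^ n)"
    proof (rule summable_comparison_test)
      show "summable (\<lambda>n. M / r0 ^ m * (1/2::real) ^ n)"
        by (intro summable_mult summable_geometric) simp
      show "\<exists>N. \<forall>n\<ge>N. norm (e n * (r0/2) ^ n) \<le> M / r0 ^ m * (1/2) ^ n"
      proof (intro exI allI impI)
        fix n :: nat
        have "\<bar>e n\<bar> \<le> norm (c (n+m) * \<omega> ^ (n+m))" unfolding e_def by (rule abs_Im_le_cmod)
        also have "\<dots> = norm (c (n+m))" using om by (simp add: norm_mult norm_power)
        also have "\<dots> \<le> M / r0 ^ (n+m)" using cb Mb order.trans by blast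
        finally have "norm (e n * (r0/2) ^ n) \<le> M / r0 ^ (n+m) * (r0/2) ^ n"
          using r0(1) mult_right_mono[of "\<bar>e n\<bar>" "M / r0 ^ (n+m)" "(r0/2)^n"]
          by (simp add: abs_mult)
        also have "M / r0 ^ (n+m) * (r0/2) ^ n = M / r0 ^ m * (1/2) ^ n"
          using r0(1) by (simp add: power_add power_divide)
        finally show "norm (e n * (r0/2) ^ n) \<le> M / r0 ^ m * (1/2) ^ n" .
      qed
    qed
    have "e 0 \<ge> 0"
      by (rule lim_nonneg[OF summ]) (use r0 pos in auto)
    thus ?thesis by (simp add: e_def)
  qed
  define u where "u = cis (pi / real N)"
  have nu: "norm u = 1" by (simp add: u_def)
  have uN: "u ^ N = -1" using N by (simp add: u_def Complex.DeMoivre)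
  define z where "z = u ^ m"
  have P: "Im (c m * z ^ j) \<ge> 0" for j
  proof -
    have "Im (c m * (u ^ j) ^ m) \<ge> 0"
    proof (rule ray)
      show "norm (u ^ j) = 1" by (simp add: nu norm_power)
      have "(u ^ j) ^ N = (u ^ N) ^ j" by (simp add: power_mult[symmetric] mult.commute)
      thus "(u ^ j) ^ N \<in> \<real>" by (simp add: uN)
    qed
    thus ?thesis by (simp add: z_def power_mult[symmetric] mult.commute)
  qed
  have zcis: "z = cis (real m * (pi / real N))" by (simp add: z_def u_def Complex.DeMoivre)
  have "\<exists>L\<ge>1. c (2*L*N) \<noteq> 0 \<and> Im (c (2*L*N)) > 0 \<and> (\<forall>n<2*L*N. c n = 0)"
  proof (cases "z = 1")
    case True
    hence "cos (real m * (pi / real N)) = 1" using zcis by (metis cis.simps(1) one_complex.sel(1))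
    then obtain k :: int where "real m * (pi / real N) = of_int k * 2 * pi"
      using cos_one_2pi_int by blast
    hence "real m = of_int k * 2 * real N" using real_eq_int_mult[OF N] by blast
    hence mk: "int m = k * 2 * int N" by (metis of_int_eq_iff of_int_mult of_int_of_nat_eq of_int_numeral)
    have "0 < k * (2 * int N)" using mk m0 by (simp add: mult.assoc)
    hence k1: "k \<ge> 1" using N by (simp add: zero_less_mult_iff)
    define L where "L = nat k"
    have "int m = int (2 * L * N)" using mk k1 unfolding L_def by (simp add: mult_ac)
    hence mL: "m = 2 * L * N" by (simp only: of_nat_eq_iff)
    have Ndvd: "N dvd m" using mL by simp
    have "Im (c m) \<ge> 0" using P[of 0] by simp
    moreover have "Im (c m) \<noteq> 0" using cm Ndvd by (simp add: c_def)
    ultimately have "Im (c m) > 0" by simp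
    thus ?thesis using cm below k1 mL by (intro exI[of _ L]) (auto simp: L_def)
  next
    case False
    have z2N: "z ^ (2*N) = 1"
    proof -
      have "z ^ (2*N) = (u ^ N) ^ (2*m)" by (simp add: z_def power_mult[symmetric] mult_ac)
      thus ?thesis by (simp add: uN power_mult)
    qed
    have "(\<Sum>j<2*N. z ^ j) = 0" using False z2N by (simp add: geometric_sum)
    moreover have "(\<Sum>j<2*N. Im (c m * z ^ j)) = Im (c m * (\<Sum>j<2*N. z ^ j))"
      by (simp only: sum_distrib_left Im_sum)
    ultimately have "(\<Sum>j<2*N. Im (c m * z ^ j)) = 0" by simp
    hence all0: "\<forall>j\<in>{..<2*N}. Im (c m * z ^ j) = 0"
      using sum_nonneg_eq_0_iff[of "{..<2*N}" "\<lambda>j. Im (c m * z ^ j)"] P by blast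
    have i0: "Im (c m) = 0" using all0[rule_format, of 0] N by simp
    have "Im (c m * z) = 0" using all0[rule_format, of 1] N by simp
    hence "Re (c m) * Im z = 0" using i0 by simp
    moreover have "Re (c m) \<noteq> 0" using cm i0 complex_eqI[of "c m" 0] by auto
    ultimately have "sin (real m * (pi / real N)) = 0" using zcis by simp
    then obtain i :: int where "real m * (pi / real N) = of_int i * 1 * pi"
      using sin_zero_iff_int2 by auto
    hence "real m = of_int i * 1 * real N" using real_eq_int_mult[OF N] by blast
    hence "int m = i * int N" by (metis mult_1_right of_int_eq_iff of_int_mult of_int_of_nat_eq)
    hence "N dvd m" by (metis dvd_triv_right int_dvd_int_iff)
    hence "c m = 0" using i0 by (simp add: c_def)
    thus ?thesis using cm by simp
  qed
  thus ?thesis by blast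
qed


lemma eval_real_if_compose:
  fixes N :: nat and \<phi> \<psi> :: "complex fps"
  assumes N: "N \<ge> 1" and re: "real_coeffs \<psi>" and eq: "\<phi> = (\<psi> oo fps_X ^ N)"
    and dom: "in_conv_domain \<phi> t" and tN: "t ^ N \<in> \<real>"
  shows "eval_fps \<phi> t \<in> \<real>"
proof -
  have "(\<lambda>n. fps_nth \<phi> n * t ^ n) sums eval_fps \<phi> t"
    by (rule sums_eval_fps) (use dom in \<open>simp add: in_conv_domain_def\<close>)
  hence s: "(\<lambda>n. Im (fps_nth \<phi> n * t ^ n)) sums Im (eval_fps \<phi> t)" by (rule sums_Im)
  have "Im (fps_nth \<phi> n * t ^ n) = 0" for n
  proof (cases "N dvd n")
    case True
    then obtain k where k: "n = N * k" by blast
    have "t ^ n = (t ^ N) ^ k" by (simp add: k power_mult)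
    also have "\<dots> \<in> \<real>" using tN by simp
    finally have "t ^ n \<in> \<real>" .
    moreover have "fps_nth \<phi> n \<in> \<real>" using re True
      by (simp add: eq compose_XN_nth[OF N] real_coeffs_def)
    ultimately show ?thesis by (metis Reals_mult complex_is_Real_iff)
  next
    case False thus ?thesis by (simp add: eq compose_XN_nth[OF N])
  qed
  hence "(\<lambda>n. Im (fps_nth \<phi> n * t ^ n)) = (\<lambda>n. 0)" by auto
  with s have "Im (eval_fps \<phi> t) = 0" by (simp add: sums_0 sums_unique2)
  thus ?thesis by (simp add: complex_is_Real_iff)
qed

theorem proposition3p3:
  fixes N :: nat and \<phi> :: "complex fps"
  assumes "N \<ge> 1"
    and "convergent_ps \<phi>"
    and "fps_nth \<phi> 0 = 0"
    and "\<forall>t. in_conv_domain \<phi> t \<and> t ^ N \<in> \<real> \<longrightarrow> Im (eval_fps \<phi> t) \<ge> 0"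
  shows "(\<exists>\<psi>0 (L::nat) (b::real) \<psi>1.
            convergent_ps \<psi>0 \<and> real_coeffs \<psi>0 \<and> L \<ge> 1 \<and> b \<ge> 0 \<and>
            convergent_ps \<psi>1 \<and> fps_nth \<psi>1 0 = 1 \<and>
            \<phi> = (\<psi>0 oo fps_X ^ N)
                + fps_const (\<i> * complex_of_real b) * fps_X ^ (2 * L * N) * \<psi>1)
       \<and> ((\<forall>t. in_conv_domain \<phi> t \<and> t ^ N \<in> \<real> \<longrightarrow> eval_fps \<phi> t \<in> \<real>)
           \<longleftrightarrow> (\<exists>\<psi>0. convergent_ps \<psi>0 \<and> real_coeffs \<psi>0 \<and> \<phi> = (\<psi>0 oo fps_X ^ N)))"
proof -
  note N = assms(1) and z0 = assms(3) and H = assms(4)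
  have conv: "fps_conv_radius \<phi> > 0" using assms(2) by (simp add: convergent_ps_def)
  define c where "c = (\<lambda>n. if N dvd n then \<i> * complex_of_real (Im (fps_nth \<phi> n)) else fps_nth \<phi> n)"
  define \<psi>0 where "\<psi>0 = Abs_fps (\<lambda>k. complex_of_real (Re (fps_nth \<phi> (k*N))))"
  define chi where "chi = Abs_fps c"
  obtain r0 M where r0: "r0 > 0" "ereal r0 < fps_conv_radius \<phi>" "M \<ge> 0"
    and M: "\<And>n. norm (fps_nth \<phi> n) * r0 ^ n \<le> M"
    using coeff_bound[OF conv] by blast
  have Mb: "norm (fps_nth \<phi> n) \<le> M * (1/r0) ^ n" for n
    using M[of n] r0(1) by (simp add: field_simps power_divide)
  have decomp: "\<phi> = (\<psi>0 oo fps_X ^ N) + chi"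
  proof (rule fps_ext)
    fix n
    show "fps_nth \<phi> n = fps_nth ((\<psi>0 oo fps_X ^ N) + chi) n"
    proof (cases "N dvd n")
      case True
      hence "n div N * N = n" by simp
      thus ?thesis using True
        by (simp add: compose_XN_nth[OF N] \<psi>0_def chi_def c_def complex_eq[symmetric])
    next
      case False thus ?thesis by (simp add: compose_XN_nth[OF N] chi_def c_def)
    qed
  qed
  have \<psi>0conv: "convergent_ps \<psi>0" unfolding convergent_ps_def
  proof (rule radius_pos[of M "(1/r0)^N"])
    fix k
    have "norm (fps_nth \<psi>0 k) \<le> norm (fps_nth \<phi> (k*N))" by (simp add: \<psi>0_def abs_Re_le_cmod)
    also have "\<dots> \<le> M * (1/r0) ^ (k*N)" by (rule Mb)
    also have "\<dots> = M * ((1/r0)^N) ^ k" by (simp add: power_mult[symmetric] mult.commute)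
    finally show "norm (fps_nth \<psi>0 k) \<le> M * ((1/r0)^N) ^ k" .
  qed (use r0 in auto)
  have \<psi>0re: "real_coeffs \<psi>0" by (simp add: real_coeffs_def \<psi>0_def)
  have C: "(\<forall>n. c n = 0) \<or> (\<exists>L\<ge>1. c (2*L*N) \<noteq> 0 \<and> Im (c (2*L*N)) > 0 \<and> (\<forall>n<2*L*N. c n = 0))"
    by (rule core[OF N conv z0 H]) (simp add: c_def)
  have part1: "\<exists>\<psi>0 (L::nat) (b::real) \<psi>1.
            convergent_ps \<psi>0 \<and> real_coeffs \<psi>0 \<and> L \<ge> 1 \<and> b \<ge> 0 \<and>
            convergent_ps \<psi>1 \<and> fps_nth \<psi>1 0 = 1 \<and>
            \<phi> = (\<psi>0 oo fps_X ^ N)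
                + fps_const (\<i> * complex_of_real b) * fps_X ^ (2 * L * N) * \<psi>1"
  proof (cases "\<forall>n. c n = 0")
    case True
    hence "chi = 0" by (simp add: chi_def fps_ext)
    hence "\<phi> = (\<psi>0 oo fps_X ^ N) + fps_const (\<i> * complex_of_real 0) * fps_X ^ (2 * 1 * N) * 1"
      using decomp by simp
    thus ?thesis using \<psi>0conv \<psi>0re
      by (intro exI[of _ \<psi>0] exI[of _ "1::nat"] exI[of _ "0::real"] exI[of _ 1]) (simp add: convergent_ps_def)
  next
    case False
    with C obtain L where L: "L \<ge> 1" "c (2*L*N) \<noteq> 0" "Im (c (2*L*N)) > 0" "\<forall>n<2*L*N. c n = 0"
      by blast
    define m where "m = 2*L*N"
    define b where "b = Im (c m)"
    have b: "b > 0" using L(3) by (simp add: b_def m_def)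
    have cm: "c m = \<i> * complex_of_real b" by (simp add: c_def b_def m_def)
    define \<psi>1 where "\<psi>1 = Abs_fps (\<lambda>n. c (n+m) / (\<i> * complex_of_real b))"
    have \<psi>10: "fps_nth \<psi>1 0 = 1" using b by (simp add: \<psi>1_def cm)
    have \<psi>1conv: "convergent_ps \<psi>1" unfolding convergent_ps_def
    proof (rule radius_pos[of "M * (1/r0)^m / b" "1/r0"])
      fix n
      have "norm (fps_nth \<psi>1 n) = norm (c (n+m)) / b" using b
        by (simp add: \<psi>1_def norm_divide norm_mult)
      also have "\<dots> \<le> norm (fps_nth \<phi> (n+m)) / b"
        using b by (intro divide_right_mono) (simp_all add: c_def abs_Im_le_cmod norm_mult)
      also have "\<dots> \<le> M * (1/r0) ^ (n+m) / b"
        using b by (intro divide_right_mono Mb) simp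
      also have "\<dots> = M * (1/r0)^m / b * (1/r0) ^ n" by (simp add: power_add)
      finally show "norm (fps_nth \<psi>1 n) \<le> M * (1/r0)^m / b * (1/r0) ^ n" .
    qed (use r0 b in auto)
    have "chi = fps_const (\<i> * complex_of_real b) * fps_X ^ m * \<psi>1"
    proof (rule fps_ext)
      fix n
      show "fps_nth chi n = fps_nth (fps_const (\<i> * complex_of_real b) * fps_X ^ m * \<psi>1) n"
        unfolding mult.assoc fps_mult_left_const_nth fps_X_power_mult_nth
        using L(4) b by (auto simp: chi_def \<psi>1_def m_def)
    qed
    hence "\<phi> = (\<psi>0 oo fps_X ^ N) + fps_const (\<i> * complex_of_real b) * fps_X ^ (2 * L * N) * \<psi>1"
      using decomp by (simp add: m_def)
    thus ?thesis using \<psi>0conv \<psi>0re \<psi>1conv \<psi>10 b L(1)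
      by (intro exI[of _ \<psi>0] exI[of _ L] exI[of _ b] exI[of _ \<psi>1]) simp
  qed
  have part2: "(\<forall>t. in_conv_domain \<phi> t \<and> t ^ N \<in> \<real> \<longrightarrow> eval_fps \<phi> t \<in> \<real>)
           \<longleftrightarrow> (\<exists>\<psi>0. convergent_ps \<psi>0 \<and> real_coeffs \<psi>0 \<and> \<phi> = (\<psi>0 oo fps_X ^ N))"
  proof
    assume R: "\<forall>t. in_conv_domain \<phi> t \<and> t ^ N \<in> \<real> \<longrightarrow> eval_fps \<phi> t \<in> \<real>"
    have allz: "\<forall>n. c n = 0"
    proof (rule ccontr)
      assume nz: "\<not> (\<forall>n. c n = 0)"
      with C obtain L where L: "c (2*L*N) \<noteq> 0" "Im (c (2*L*N)) > 0" "\<forall>n<2*L*N. c n = 0"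
        by blast
      have conv': "fps_conv_radius (-\<phi>) > 0" using conv by simp
      have z0': "fps_nth (-\<phi>) 0 = 0" using z0 by simp
      have H': "\<forall>t. in_conv_domain (-\<phi>) t \<and> t ^ N \<in> \<real> \<longrightarrow> Im (eval_fps (-\<phi>) t) \<ge> 0"
      proof (intro allI impI)
        fix t assume t: "in_conv_domain (-\<phi>) t \<and> t ^ N \<in> \<real>"
        hence d: "in_conv_domain \<phi> t" by (simp add: in_conv_domain_def)
        hence "eval_fps \<phi> t \<in> \<real>" using R t by blast
        moreover have "eval_fps (-\<phi>) t = - eval_fps \<phi> t"
          by (rule eval_fps_minus) (use d in \<open>simp add: in_conv_domain_def\<close>)
        ultimately show "Im (eval_fps (-\<phi>) t) \<ge> 0" by (simp add: complex_is_Real_iff)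
      qed
      have C': "(\<forall>n. - c n = 0) \<or> (\<exists>L\<ge>1. - c (2*L*N) \<noteq> 0 \<and> Im (- c (2*L*N)) > 0 \<and> (\<forall>n<2*L*N. - c n = 0))"
        by (rule core[OF N conv' z0' H']) (simp add: c_def)
      then obtain L' where L': "c (2*L'*N) \<noteq> 0" "Im (c (2*L'*N)) < 0" "\<forall>n<2*L'*N. c n = 0"
        using L(1) by auto
      have "\<not> 2*L'*N < 2*L*N" using L'(1) L(3) by blast
      moreover have "\<not> 2*L*N < 2*L'*N" using L(1) L'(3) by blast
      ultimately have "2*L'*N = 2*L*N" by (meson linorder_neqE_nat)
      thus False using L(2) L'(2) by (metis less_asym)
    qed
    hence "chi = 0" by (simp add: chi_def fps_ext)
    hence "\<phi> = (\<psi>0 oo fps_X ^ N)" using decomp by simp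
    thus "\<exists>\<psi>0. convergent_ps \<psi>0 \<and> real_coeffs \<psi>0 \<and> \<phi> = (\<psi>0 oo fps_X ^ N)"
      using \<psi>0conv \<psi>0re by blast
  next
    assume "\<exists>\<psi>0. convergent_ps \<psi>0 \<and> real_coeffs \<psi>0 \<and> \<phi> = (\<psi>0 oo fps_X ^ N)"
    then obtain \<psi> where "real_coeffs \<psi>" "\<phi> = (\<psi> oo fps_X ^ N)" by blast
    thus "\<forall>t. in_conv_domain \<phi> t \<and> t ^ N \<in> \<real> \<longrightarrow> eval_fps \<phi> t \<in> \<real>"
      using eval_real_if_compose[OF N] by blast
  qed
  show ?thesis using part1 part2 by blast
qed

end
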